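(* Let $P$ be a finite lattice. The following are equivalent: (i) $P$ is linearly ordered; (ii) the lattice $(\mathcal{L}_P,\le)$ is distributive; (iii) the lattice $(\mathcal{L}_P,\le)$ is modular.
   Context: For a finite lattice $P$, $\mathcal{L}_P$ denotes the set of maps $f:P\to P$ satisfying (A.1) $a\le f(a)$ for all $a$; (A.2) $a\le b$ implies $f(a)\le f(b)$; (A.3) $f(f(a))=f(a)$, ordered pointwise ($f\le g$ iff $f(a)\le g(a)$ for all $a$); this order makes $\mathcal{L}_P$ a lattice. *)

theory Defs
  imports Main
begin

text \<open>The set L_P of closure operators on an ordered type; it is ordered by the
  pointwise order on functions, which is Isabelle's built-in order on function types.\<close>
definition closure_ops :: "('a::order \<Rightarrow> 'a) set" where
  "closure_ops = {f. (\<forall>a. a \<le> f a) \<and> (\<forall>a b. a \<le> b \<longrightarrow> f a \<le> f b) \<and> (\<forall>a. f (f a) = f a)}"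

definition is_lub_in :: "'b::order set \<Rightarrow> 'b \<Rightarrow> 'b \<Rightarrow> 'b \<Rightarrow> bool" where
  "is_lub_in S x y z \<longleftrightarrow> z \<in> S \<and> x \<le> z \<and> y \<le> z \<and> (\<forall>w\<in>S. x \<le> w \<and> y \<le> w \<longrightarrow> z \<le> w)"

definition is_glb_in :: "'b::order set \<Rightarrow> 'b \<Rightarrow> 'b \<Rightarrow> 'b \<Rightarrow> bool" where
  "is_glb_in S x y z \<longleftrightarrow> z \<in> S \<and> z \<le> x \<and> z \<le> y \<and> (\<forall>w\<in>S. w \<le> x \<and> w \<le> y \<longrightarrow> w \<le> z)"

definition join_in :: "'b::order set \<Rightarrow> 'b \<Rightarrow> 'b \<Rightarrow> 'b" where
  "join_in S x y = (THE z. is_lub_in S x y z)"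

definition meet_in :: "'b::order set \<Rightarrow> 'b \<Rightarrow> 'b \<Rightarrow> 'b" where
  "meet_in S x y = (THE z. is_glb_in S x y z)"

definition distributive_in :: "'b::order set \<Rightarrow> bool" where
  "distributive_in S \<longleftrightarrow> (\<forall>x\<in>S. \<forall>y\<in>S. \<forall>z\<in>S.
     meet_in S x (join_in S y z) = join_in S (meet_in S x y) (meet_in S x z))"

definition modular_in :: "'b::order set \<Rightarrow> bool" where
  "modular_in S \<longleftrightarrow> (\<forall>x\<in>S. \<forall>y\<in>S. \<forall>z\<in>S.
     x \<le> z \<longrightarrow> join_in S x (meet_in S y z) = meet_in S (join_in S x y) z)"

end

theory Submission
  imports Defs
begin

definition Fx :: "('a \<Rightarrow> 'a) \<Rightarrow> 'a set" where "Fx f = {x. f x = x}"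

definition topel :: "'a::{finite,lattice}" where "topel = Sup_fin UNIV"

lemma le_topel: "x \<le> (topel::'a::{finite,lattice})"
  unfolding topel_def by (rule Sup_fin.coboundedI) auto

lemma clD:
  assumes "f \<in> closure_ops"
  shows "a \<le> f a" "a \<le> b \<Longrightarrow> f a \<le> f b" "f (f a) = f a"
  using assms unfolding closure_ops_def by auto

lemma le_iff_Fx:
  assumes f: "f \<in> closure_ops" and g: "g \<in> closure_ops"
  shows "f \<le> g \<longleftrightarrow> Fx g \<subseteq> Fx f"
proof
  assume "f \<le> g"
  show "Fx g \<subseteq> Fx f"
  proof
    fix y assume "y \<in> Fx g"
    hence "g y = y" by (simp add: Fx_def)
    moreover have "f y \<le> g y" using \<open>f \<le> g\<close> by (simp add: le_funD)
    ultimately show "y \<in> Fx f" using clD(1)[OF f, of y] by (simp add: Fx_def antisym)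
  qed
next
  assume h: "Fx g \<subseteq> Fx f"
  show "f \<le> g"
  proof (rule le_funI)
    fix x
    have "g x \<in> Fx g" using clD(3)[OF g] by (simp add: Fx_def)
    hence "f (g x) = g x" using h by (auto simp: Fx_def)
    moreover have "f x \<le> f (g x)" using clD(1)[OF g] clD(2)[OF f] by blast
    ultimately show "f x \<le> g x" by simp
  qed
qed

lemma eq_Fx:
  assumes "f \<in> closure_ops" "g \<in> closure_ops" "Fx f = Fx g"
  shows "f = g"
  using le_iff_Fx[OF assms(1,2)] le_iff_Fx[OF assms(2,1)] assms(3) by (simp add: antisym)

lemma below_if_fix:
  assumes h: "h \<in> closure_ops" and "\<And>x. h (g x) = g x" and "\<And>x. x \<le> g x"
  shows "h \<le> g"
proof (rule le_funI)
  fix x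
  have "h x \<le> h (g x)" using clD(2)[OF h] assms(3) by blast
  thus "h x \<le> g x" using assms(2) by simp
qed

lemma join_eq: assumes "is_lub_in S x y z" shows "join_in S x y = z"
  unfolding join_in_def
proof (rule the_equality)
  show "is_lub_in S x y z" by fact
  fix w assume "is_lub_in S x y w" thus "w = z" using assms
    unfolding is_lub_in_def by (meson antisym)
qed

lemma meet_eq: assumes "is_glb_in S x y z" shows "meet_in S x y = z"
  unfolding meet_in_def
proof (rule the_equality)
  show "is_glb_in S x y z" by fact
  fix w assume "is_glb_in S x y w" thus "w = z" using assms
    unfolding is_glb_in_def by (meson antisym)
qed

lemma top_Fx: "f \<in> closure_ops \<Longrightarrow> topel \<in> Fx f"
  using clD(1)[of f topel] le_topel[of "f topel"] by (simp add: Fx_def antisym)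

lemma chain_least:
  assumes lin: "\<forall>x y::'a::order. x \<le> y \<or> y \<le> x"
    and "finite A" "A \<noteq> {}"
  shows "\<exists>y\<in>(A::'a set). \<forall>z\<in>A. y \<le> z"
  using assms(2,3)
proof (induction A rule: finite_ne_induct)
  case (singleton x) thus ?case by auto
next
  case (insert x F)
  then obtain y where "y \<in> F" "\<forall>z\<in>F. y \<le> z" by auto
  thus ?case using lin by (metis insert_iff order_trans)
qed

definition cl :: "'a::{finite,lattice} set \<Rightarrow> 'a \<Rightarrow> 'a" where
  "cl S x = (SOME y. y \<in> S \<and> x \<le> y \<and> (\<forall>z\<in>S. x \<le> z \<longrightarrow> y \<le> z))"

lemma cl_spec:
  fixes S :: "'a::{finite,lattice} set" and x :: 'a
  assumes lin: "\<forall>x y::'a::{finite,lattice}. x \<le> y \<or> y \<le> x" and T: "topel \<in> S"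
  shows "cl S x \<in> S \<and> x \<le> cl S x \<and> (\<forall>z\<in>S. x \<le> z \<longrightarrow> cl S x \<le> z)"
proof -
  have "\<exists>y\<in>{y\<in>S. x \<le> y}. \<forall>z\<in>{y\<in>S. x \<le> y}. y \<le> z"
    using chain_least[OF lin, of "{y\<in>S. x \<le> y}"] T le_topel[of x] by auto
  hence "\<exists>y. y \<in> S \<and> x \<le> y \<and> (\<forall>z\<in>S. x \<le> z \<longrightarrow> y \<le> z)" by auto
  thus ?thesis unfolding cl_def by (rule someI_ex)
qed

lemma cl_L:
  fixes S :: "'a::{finite,lattice} set"
  assumes lin: "\<forall>x y::'a::{finite,lattice}. x \<le> y \<or> y \<le> x" and T: "topel \<in> S"
  shows "cl S \<in> closure_ops"
proof -
  note s = cl_spec[OF lin T]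
  have "cl S (cl S a) = cl S a" for a
    using s[of a] s[of "cl S a"] by (meson antisym order_refl)
  moreover have "a \<le> b \<Longrightarrow> cl S a \<le> cl S b" for a b
    using s[of a] s[of b] by (meson order_trans)
  ultimately show ?thesis unfolding closure_ops_def using s by auto
qed

lemma Fx_cl:
  fixes S :: "'a::{finite,lattice} set"
  assumes lin: "\<forall>x y::'a::{finite,lattice}. x \<le> y \<or> y \<le> x" and T: "topel \<in> S"
  shows "Fx (cl S) = S"
proof -
  note s = cl_spec[OF lin T]
  show ?thesis unfolding Fx_def
  proof (intro set_eqI iffI)
    fix y assume "y \<in> {x. cl S x = x}" thus "y \<in> S" using s[of y] by auto
  next
    fix y assume "y \<in> S" thus "y \<in> {x. cl S x = x}" using s[of y] by (auto intro: antisym)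
  qed
qed

lemma chain_join:
  assumes lin: "\<forall>x y::'a::{finite,lattice}. x \<le> y \<or> y \<le> x"
    and f: "(f::'a \<Rightarrow> 'a) \<in> closure_ops" and g: "g \<in> closure_ops"
  shows "join_in closure_ops f g \<in> closure_ops \<and> Fx (join_in closure_ops f g) = Fx f \<inter> Fx g"
proof -
  have T: "topel \<in> Fx f \<inter> Fx g" using top_Fx f g by auto
  note c = cl_L[OF lin T] Fx_cl[OF lin T]
  have "is_lub_in closure_ops f g (cl (Fx f \<inter> Fx g))"
    unfolding is_lub_in_def using c f g le_iff_Fx by auto
  thus ?thesis using join_eq c by metis
qed

lemma chain_meet:
  assumes lin: "\<forall>x y::'a::{finite,lattice}. x \<le> y \<or> y \<le> x"
    and f: "(f::'a \<Rightarrow> 'a) \<in> closure_ops" and g: "g \<in> closure_ops"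
  shows "meet_in closure_ops f g \<in> closure_ops \<and> Fx (meet_in closure_ops f g) = Fx f \<union> Fx g"
proof -
  have T: "topel \<in> Fx f \<union> Fx g" using top_Fx f g by auto
  note c = cl_L[OF lin T] Fx_cl[OF lin T]
  have "is_glb_in closure_ops f g (cl (Fx f \<union> Fx g))"
    unfolding is_glb_in_def using c f g le_iff_Fx by auto
  thus ?thesis using meet_eq c by metis
qed

lemma chain_dist:
  assumes lin: "\<forall>x y::'a::{finite,lattice}. x \<le> y \<or> y \<le> x"
  shows "distributive_in (closure_ops :: ('a \<Rightarrow> 'a) set)"
  unfolding distributive_in_def
proof (intro ballI)
  fix x y z :: "'a \<Rightarrow> 'a"
  assume h: "x \<in> closure_ops" "y \<in> closure_ops" "z \<in> closure_ops"
  note J = chain_join[OF lin] and M = chain_meet[OF lin]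
  show "meet_in closure_ops x (join_in closure_ops y z) =
        join_in closure_ops (meet_in closure_ops x y) (meet_in closure_ops x z)"
    apply (rule eq_Fx)
    using h J M by (auto simp: J M)
qed

lemma chain_mod:
  assumes lin: "\<forall>x y::'a::{finite,lattice}. x \<le> y \<or> y \<le> x"
  shows "modular_in (closure_ops :: ('a \<Rightarrow> 'a) set)"
  unfolding modular_in_def
proof (intro ballI impI)
  fix x y z :: "'a \<Rightarrow> 'a"
  assume h: "x \<in> closure_ops" "y \<in> closure_ops" "z \<in> closure_ops" and "x \<le> z"
  hence s: "Fx z \<subseteq> Fx x" using le_iff_Fx by blast
  note J = chain_join[OF lin] and M = chain_meet[OF lin]
  show "join_in closure_ops x (meet_in closure_ops y z) =
        meet_in closure_ops (join_in closure_ops x y) z"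
    apply (rule eq_Fx)
    using h J M s by (auto simp: J M)
qed

lemma nonchain:
  fixes a b :: "'a::{finite,lattice}"
  assumes ab: "\<not> a \<le> b" and ba: "\<not> b \<le> a"
  shows "\<not> modular_in (closure_ops :: ('a \<Rightarrow> 'a) set) \<and> \<not> distributive_in (closure_ops :: ('a \<Rightarrow> 'a) set)"
proof -
  define m where "m = inf a b"
  define T where "T = (topel :: 'a)"
  have lt: "x \<le> T" for x unfolding T_def by (rule le_topel)
  have ma: "m \<le> a" and mb: "m \<le> b" unfolding m_def by auto
  have nam: "\<not> a \<le> m" using ab ma mb order_trans by blast
  have nbm: "\<not> b \<le> m" using ba ma mb order_trans by blast
  have nTa: "\<not> T \<le> a" using ba lt order_trans by blast
  have nTb: "\<not> T \<le> b" using ab lt order_trans by blast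
  have nTm: "\<not> T \<le> m" using nTa ma order_trans by blast
  have leab: "x \<le> a \<Longrightarrow> x \<le> b \<Longrightarrow> x \<le> m" for x unfolding m_def by simp
  note facts = lt ma mb nam nbm nTa nTb nTm ab ba
  define fX where "fX x = (if x \<le> a then a else T)" for x
  define fY where "fY x = (if x \<le> b then b else T)" for x
  define fZ where "fZ x = (if x \<le> m then m else if x \<le> a then a else T)" for x
  define fW where "fW x = (if x \<le> m then m else if x \<le> a then a else if x \<le> b then b else T)" for x
  define fT where "fT x = T" for x :: 'a
  have LX: "fX \<in> closure_ops" unfolding closure_ops_def fX_def using facts
    by (auto intro: order_trans)
  have LY: "fY \<in> closure_ops" unfolding closure_ops_def fY_def using facts
    by (auto intro: order_trans)
  have LZ: "fZ \<in> closure_ops" unfolding closure_ops_def fZ_def using facts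
    by (auto intro: order_trans)
  have LW: "fW \<in> closure_ops" unfolding closure_ops_def fW_def using facts leab
    by (auto intro: order_trans)
  have LT: "fT \<in> closure_ops" unfolding closure_ops_def fT_def using facts by auto
  have WZ: "fW \<le> fZ" unfolding le_fun_def fW_def fZ_def using facts by auto
  have WY: "fW \<le> fY" unfolding le_fun_def fW_def fY_def using facts leab by (auto intro: order_trans)
  have WX: "fW \<le> fX" unfolding le_fun_def fW_def fX_def using facts by (auto intro: order_trans)
  have ZX: "fZ \<le> fX" unfolding le_fun_def fZ_def fX_def using facts by (auto intro: order_trans)
  have XT: "fX \<le> fT" unfolding le_fun_def fT_def using facts by auto
  have YT: "fY \<le> fT" unfolding le_fun_def fT_def using facts by auto
  have ZT: "fZ \<le> fT" unfolding le_fun_def fT_def using facts by auto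
  have glbW: "h \<le> fW" if h: "h \<in> closure_ops" "h \<le> fY" "h \<le> fX" for h
  proof -
    have ha: "h a = a" using le_funD[OF h(3), of a] clD(1)[OF h(1), of a]
      by (simp add: fX_def antisym)
    have hb: "h b = b" using le_funD[OF h(2), of b] clD(1)[OF h(1), of b]
      by (simp add: fY_def antisym)
    have hm: "h m = m" using clD(2)[OF h(1) ma] clD(2)[OF h(1) mb] ha hb leab
      clD(1)[OF h(1), of m] by (simp add: antisym)
    have hT: "h T = T" using clD(1)[OF h(1), of T] lt[of "h T"] by (simp add: antisym)
    show ?thesis
      by (rule below_if_fix[OF h(1)]) (use ha hb hm hT lt in \<open>auto simp: fW_def\<close>)
  qed
  have lubT: "fT \<le> h" if h: "h \<in> closure_ops" "fZ \<le> h" "fY \<le> h" for h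
  proof (rule le_funI)
    fix x
    define y where "y = h x"
    have hy: "h y = y" unfolding y_def using clD(3)[OF h(1)] by simp
    have "fZ y = y" using le_funD[OF h(2), of y] clD(1)[OF LZ, of y] hy by (simp add: antisym)
    moreover have "fY y = y" using le_funD[OF h(3), of y] clD(1)[OF LY, of y] hy by (simp add: antisym)
    ultimately have "y = T" using facts unfolding fZ_def fY_def
      by (auto split: if_splits)
    thus "fT x \<le> h x" by (simp add: fT_def y_def)
  qed
  have m1: "meet_in closure_ops fY fX = fW"
    by (rule meet_eq) (use LW WY WX glbW in \<open>auto simp: is_glb_in_def\<close>)
  have m2: "meet_in closure_ops fX fY = fW"
    by (rule meet_eq) (use LW WY WX glbW in \<open>auto simp: is_glb_in_def\<close>)
  have j1: "join_in closure_ops fZ fW = fZ"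
    by (rule join_eq) (use LZ WZ in \<open>auto simp: is_lub_in_def\<close>)
  have j2: "join_in closure_ops fZ fY = fT"
    by (rule join_eq) (use LT ZT YT lubT in \<open>auto simp: is_lub_in_def\<close>)
  have m3: "meet_in closure_ops fT fX = fX"
    by (rule meet_eq) (use LX XT in \<open>auto simp: is_glb_in_def\<close>)
  have m4: "meet_in closure_ops fX fT = fX"
    by (rule meet_eq) (use LX XT in \<open>auto simp: is_glb_in_def\<close>)
  have m5: "meet_in closure_ops fX fZ = fZ"
    by (rule meet_eq) (use LZ ZX in \<open>auto simp: is_glb_in_def\<close>)
  have ne: "fZ \<noteq> fX"
  proof
    assume "fZ = fX" hence "fZ m = fX m" by simp
    thus False using ma nam by (simp add: fZ_def fX_def)
  qed
  have "\<not> modular_in (closure_ops :: ('a \<Rightarrow> 'a) set)"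
  proof
    assume "modular_in (closure_ops :: ('a \<Rightarrow> 'a) set)"
    hence "join_in closure_ops fZ (meet_in closure_ops fY fX) = meet_in closure_ops (join_in closure_ops fZ fY) fX"
      unfolding modular_in_def using LZ LY LX ZX by blast
    thus False using m1 j1 j2 m3 ne by simp
  qed
  moreover have "\<not> distributive_in (closure_ops :: ('a \<Rightarrow> 'a) set)"
  proof
    assume "distributive_in (closure_ops :: ('a \<Rightarrow> 'a) set)"
    hence "meet_in closure_ops fX (join_in closure_ops fZ fY) = join_in closure_ops (meet_in closure_ops fX fZ) (meet_in closure_ops fX fY)"
      unfolding distributive_in_def using LZ LY LX by blast
    thus False using m2 m4 m5 j1 j2 ne by simp
  qed
  ultimately show ?thesis by blast
qed

theorem mainTheorem8:
  shows "((\<forall>x y :: 'a::{finite,lattice}. x \<le> y \<or> y \<le> x)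
            \<longleftrightarrow> distributive_in (closure_ops :: ('a \<Rightarrow> 'a) set))
       \<and> (distributive_in (closure_ops :: ('a \<Rightarrow> 'a) set)
            \<longleftrightarrow> modular_in (closure_ops :: ('a \<Rightarrow> 'a) set))"
proof (cases "\<forall>x y :: 'a. x \<le> y \<or> y \<le> x")
  case True
  thus ?thesis using chain_dist chain_mod by blast
next
  case False
  then obtain a b :: 'a where "\<not> a \<le> b" "\<not> b \<le> a" by blast
  thus ?thesis using nonchain False by blast
qed

end
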